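(* Let $\mathfrak g$ be a $3$-Lie algebra over a field $\mathbb k$ and $(X,\Delta,T)$ its associated TSD object. Define $\Lambda^2(\phi)((a,x)\otimes(b,y)\otimes(c,z))=(0,\phi(x,y,z))$ for $3$-Lie $2$-cochains $\phi$. Then $\Lambda^2$ maps $3$-Lie $2$-cocycles to TSD $2$-cocycles and $3$-Lie $2$-coboundaries to TSD $2$-coboundaries, hence induces a homomorphism $H^2_{3\rm Lie}(\mathfrak g;\mathfrak g)\to H^2_{\rm TSD}(X;X)$.
   Context: A $3$-Lie algebra (Filippov) is a vector space $\mathfrak g$ with an alternating trilinear bracket $[\cdot,\cdot,\cdot]$ satisfying $[[x,y,z],w,u]=[[x,w,u],y,z]+[x,[y,w,u],z]+[x,y,[z,w,u]]$. Associated TSD object: $X=\mathbb k\oplus\mathfrak g$, $\Delta(a,x)=(a,x)\otimes(1,0)+(1,0)\otimes(0,x)$, $\Delta_3=(\Delta\otimes\mathbb 1)\Delta$ (Sweedler $w^{(1)}\otimes w^{(2)}\otimes w^{(3)}$), $T((a,x)\otimes(b,y)\otimes(c,z))=(abc,\ bcx+[x,y,z])$. $3$-Lie cohomology: $2$-cochains are alternating trilinear $\phi\colon\mathfrak g^3\to\mathfrak g$; $\delta^2\phi(x,y,z,w,u)=[\phi(x,y,z),w,u]+\phi([x,y,z],w,u)-[\phi(x,w,u),y,z]-[x,\phi(y,w,u),z]-[x,y,\phi(z,w,u)]-\phi([x,w,u],y,z)-\phi(x,[y,w,u],z)-\phi(x,y,[z,w,u])$; for linear $f\colon\mathfrak g\to\mathfrak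 g$, $\delta^1f(x,y,z)=f([x,y,z])-[f(x),y,z]-[x,f(y),z]-[x,y,f(z)]$; $H^2_{3\rm Lie}=\ker\delta^2/\operatorname{im}\delta^1$. TSD cohomology: with $\sigma$ sending $u_1\otimes\cdots\otimes u_9$ to $u_1\otimes u_4\otimes u_7\otimes u_2\otimes u_5\otimes u_8\otimes u_3\otimes u_6\otimes u_9$: $C^1_{\rm TSD}$ = linear $f$ with $\Delta_3 f=(f\otimes\mathbb 1\otimes\mathbb 1+\mathbb 1\otimes f\otimes\mathbb 1+\mathbb 1\otimes\mathbb 1\otimes f)\Delta_3$; $C^2_{\rm TSD}$ = linear $\psi$ with $\Delta_3\psi=(\psi\otimes T\otimes T+T\otimes\psi\otimes T+T\otimes T\otimes\psi)\sigma\Delta_3^{\otimes3}$; $\delta^1 f(x\otimes y\otimes z)=f(T(x\otimes y\otimes z))-T(f(x)\otimes y\otimes z)-T(x\otimes f(y)\otimes z)-T(x\otimes y\otimes f(z))$; $\delta^2\psi(x\otimes y\otimes z\otimes w\otimes u)=T(\psi(x\otimes y\otimes z)\otimes w\otimes u)+\psi(T(x\otimes y\otimes z)\otimes w\otimes u)-\psi(A_1\otimes A_2\otimes A_3)-T(\Psi_1\otimes A_2\otimes A_3)-T(A_1\otimes\Psi_2\otimes A_3)-T(A_1\otimes A_2\otimes\Psi_3)$, $A_i=T(x_i\otimes w^{(i)}\otimes u^{(i)})$, $(x_1,x_2,x_3)=(x,y,z)$, $\Psi_i$ likewise with $\psi$; $H^2_{\rm TSD}=(C^2\cap\ker\delta^2)/\delta^1(C^1)$.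 *)

theory Defs
  imports Main HOL.Vector_Spaces "HOL-Library.Product_Plus"
begin

definition is_linear :: "('k \<Rightarrow> 'a::ab_group_add \<Rightarrow> 'a) \<Rightarrow> ('k \<Rightarrow> 'b::ab_group_add \<Rightarrow> 'b) \<Rightarrow> ('a \<Rightarrow> 'b) \<Rightarrow> bool" where
  "is_linear s1 s2 f \<longleftrightarrow> (\<forall>x y. f (x + y) = f x + f y) \<and> (\<forall>c x. f (s1 c x) = s2 c (f x))"

definition trilin :: "('k \<Rightarrow> 'a::ab_group_add \<Rightarrow> 'a) \<Rightarrow> ('k \<Rightarrow> 'b::ab_group_add \<Rightarrow> 'b) \<Rightarrow> ('a \<Rightarrow> 'a \<Rightarrow> 'a \<Rightarrow> 'b) \<Rightarrow> bool" where
  "trilin s1 s2 F \<longleftrightarrow> (\<forall>y z. is_linear s1 s2 (\<lambda>x. F x y z)) \<and> (\<forall>x z. is_linear s1 s2 (\<lambda>y. F x y z))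
      \<and> (\<forall>x y. is_linear s1 s2 (\<lambda>z. F x y z))"

definition alternating3 :: "('a \<Rightarrow> 'a \<Rightarrow> 'a \<Rightarrow> 'b::zero) \<Rightarrow> bool" where
  "alternating3 F \<longleftrightarrow> (\<forall>x z. F x x z = 0) \<and> (\<forall>x y. F x y y = 0) \<and> (\<forall>x y. F x y x = 0)"

definition three_Lie :: "('k::field \<Rightarrow> 'g::ab_group_add \<Rightarrow> 'g) \<Rightarrow> ('g \<Rightarrow> 'g \<Rightarrow> 'g \<Rightarrow> 'g) \<Rightarrow> bool" where
  "three_Lie s br \<longleftrightarrow> vector_space s \<and> trilin s s br \<and> alternating3 br \<and>
     (\<forall>x y z w u. br (br x y z) w u = br (br x w u) y z + br x (br y w u) z + br x y (br z w u))"

definition Lie_cochain2 :: "('k::field \<Rightarrow> 'g::ab_group_add \<Rightarrow> 'g) \<Rightarrow> ('g \<Rightarrow> 'g \<Rightarrow> 'g \<Rightarrow> 'g) \<Rightarrow> bool" where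
  "Lie_cochain2 s \<phi> \<longleftrightarrow> trilin s s \<phi> \<and> alternating3 \<phi>"

definition Lie_delta2 :: "('g::ab_group_add \<Rightarrow> 'g \<Rightarrow> 'g \<Rightarrow> 'g) \<Rightarrow> ('g \<Rightarrow> 'g \<Rightarrow> 'g \<Rightarrow> 'g) \<Rightarrow> 'g \<Rightarrow> 'g \<Rightarrow> 'g \<Rightarrow> 'g \<Rightarrow> 'g \<Rightarrow> 'g" where
  "Lie_delta2 br \<phi> x y z w u =
     br (\<phi> x y z) w u + \<phi> (br x y z) w u - br (\<phi> x w u) y z - br x (\<phi> y w u) z - br x y (\<phi> z w u)
     - \<phi> (br x w u) y z - \<phi> x (br y w u) z - \<phi> x y (br z w u)"

definition Lie_delta1 :: "('g::ab_group_add \<Rightarrow> 'g \<Rightarrow> 'g \<Rightarrow> 'g) \<Rightarrow> ('g \<Rightarrow> 'g) \<Rightarrow> 'g \<Rightarrow> 'g \<Rightarrow> 'g \<Rightarrow> 'g" where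
  "Lie_delta1 br f x y z = f (br x y z) - br (f x) y z - br x (f y) z - br x y (f z)"

definition Lie_cocycle2 :: "('k::field \<Rightarrow> 'g::ab_group_add \<Rightarrow> 'g) \<Rightarrow> ('g \<Rightarrow> 'g \<Rightarrow> 'g \<Rightarrow> 'g) \<Rightarrow> ('g \<Rightarrow> 'g \<Rightarrow> 'g \<Rightarrow> 'g) \<Rightarrow> bool" where
  "Lie_cocycle2 s br \<phi> \<longleftrightarrow> Lie_cochain2 s \<phi> \<and> (\<forall>x y z w u. Lie_delta2 br \<phi> x y z w u = 0)"

definition Lie_coboundary2 :: "('k::field \<Rightarrow> 'g::ab_group_add \<Rightarrow> 'g) \<Rightarrow> ('g \<Rightarrow> 'g \<Rightarrow> 'g \<Rightarrow> 'g) \<Rightarrow> ('g \<Rightarrow> 'g \<Rightarrow> 'g \<Rightarrow> 'g) \<Rightarrow> bool" where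
  "Lie_coboundary2 s br \<phi> \<longleftrightarrow> (\<exists>f. is_linear s s f \<and> \<phi> = Lie_delta1 br f)"

definition scaleX :: "('k::field \<Rightarrow> 'g::ab_group_add \<Rightarrow> 'g) \<Rightarrow> 'k \<Rightarrow> 'k \<times> 'g \<Rightarrow> 'k \<times> 'g" where
  "scaleX s c p = (c * fst p, s c (snd p))"

text \<open>Tensors in X (x) X (x) X are represented by finite lists of pure tensors
  (the list [(a1,b1,c1),...] stands for the sum of the a_i (x) b_i (x) c_i).
  Two such representatives denote the same tensor iff all product functionals
  l1 (x) l2 (x) l3 (with l_i linear functionals on X) agree on them; over a field
  this is exactly equality in the tensor product.\<close>

definition teq3 :: "('k::field \<Rightarrow> 'g::ab_group_add \<Rightarrow> 'g) \<Rightarrow> (('k \<times> 'g) \<times> ('k \<times> 'g) \<times> ('k \<times> 'g)) list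
     \<Rightarrow> (('k \<times> 'g) \<times> ('k \<times> 'g) \<times> ('k \<times> 'g)) list \<Rightarrow> bool" where
  "teq3 s L1 L2 \<longleftrightarrow> (\<forall>l1 l2 l3. is_linear (scaleX s) (*) l1 \<and> is_linear (scaleX s) (*) l2 \<and> is_linear (scaleX s) (*) l3 \<longrightarrow>
      sum_list (map (\<lambda>(p,q,r). l1 p * l2 q * l3 r) L1) = sum_list (map (\<lambda>(p,q,r). l1 p * l2 q * l3 r) L2))"

definition Delta :: "'k::field \<times> 'g::ab_group_add \<Rightarrow> (('k \<times> 'g) \<times> ('k \<times> 'g)) list" where
  "Delta w = [(w, (1, 0)), ((1, 0), (0, snd w))]"

text \<open>Delta_3 = (Delta (x) 1) Delta\<close>
definition Delta3 :: "'k::field \<times> 'g::ab_group_add \<Rightarrow> (('k \<times> 'g) \<times> ('k \<times> 'g) \<times> ('k \<times> 'g)) list" where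
  "Delta3 w = concat (map (\<lambda>(u, v). map (\<lambda>(p, q). (p, q, v)) (Delta u)) (Delta w))"

definition TT :: "('k::field \<Rightarrow> 'g::ab_group_add \<Rightarrow> 'g) \<Rightarrow> ('g \<Rightarrow> 'g \<Rightarrow> 'g \<Rightarrow> 'g)
     \<Rightarrow> 'k \<times> 'g \<Rightarrow> 'k \<times> 'g \<Rightarrow> 'k \<times> 'g \<Rightarrow> 'k \<times> 'g" where
  "TT s br p q r = (fst p * fst q * fst r, s (fst q * fst r) (snd p) + br (snd p) (snd q) (snd r))"

text \<open>Delta_3^{(x)3}(x (x) y (x) z), a 9-fold tensor grouped as three triples\<close>
definition Delta3_cube :: "'k::field \<times> 'g::ab_group_add \<Rightarrow> 'k \<times> 'g \<Rightarrow> 'k \<times> 'g \<Rightarrow>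
    ((('k \<times> 'g) \<times> ('k \<times> 'g) \<times> ('k \<times> 'g)) \<times> (('k \<times> 'g) \<times> ('k \<times> 'g) \<times> ('k \<times> 'g)) \<times> (('k \<times> 'g) \<times> ('k \<times> 'g) \<times> ('k \<times> 'g))) list" where
  "Delta3_cube x y z = [(tx, ty, tz). tx \<leftarrow> Delta3 x, ty \<leftarrow> Delta3 y, tz \<leftarrow> Delta3 z]"

fun sigma9 :: "('a \<times> 'a \<times> 'a) \<times> ('a \<times> 'a \<times> 'a) \<times> ('a \<times> 'a \<times> 'a) \<Rightarrow> ('a \<times> 'a \<times> 'a) \<times> ('a \<times> 'a \<times> 'a) \<times> ('a \<times> 'a \<times> 'a)" where
  "sigma9 ((u1, u2, u3), (u4, u5, u6), (u7, u8, u9)) = ((u1, u4, u7), (u2, u5, u8), (u3, u6, u9))"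

definition TSD_C1 :: "('k::field \<Rightarrow> 'g::ab_group_add \<Rightarrow> 'g) \<Rightarrow> ('k \<times> 'g \<Rightarrow> 'k \<times> 'g) \<Rightarrow> bool" where
  "TSD_C1 s f \<longleftrightarrow> is_linear (scaleX s) (scaleX s) f \<and>
     (\<forall>w. teq3 s (Delta3 (f w))
          (map (\<lambda>(p, q, r). (f p, q, r)) (Delta3 w) @ map (\<lambda>(p, q, r). (p, f q, r)) (Delta3 w)
           @ map (\<lambda>(p, q, r). (p, q, f r)) (Delta3 w)))"

definition TSD_C2 :: "('k::field \<Rightarrow> 'g::ab_group_add \<Rightarrow> 'g) \<Rightarrow> ('g \<Rightarrow> 'g \<Rightarrow> 'g \<Rightarrow> 'g)
     \<Rightarrow> ('k \<times> 'g \<Rightarrow> 'k \<times> 'g \<Rightarrow> 'k \<times> 'g \<Rightarrow> 'k \<times> 'g) \<Rightarrow> bool" where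
  "TSD_C2 s br \<psi> \<longleftrightarrow> trilin (scaleX s) (scaleX s) \<psi> \<and>
     (\<forall>x y z. teq3 s (Delta3 (\<psi> x y z))
        (let S = map sigma9 (Delta3_cube x y z);
             P = (\<lambda>(p, q, r). \<psi> p q r); Tm = (\<lambda>(p, q, r). TT s br p q r)
         in map (\<lambda>(a, b, c). (P a, Tm b, Tm c)) S @ map (\<lambda>(a, b, c). (Tm a, P b, Tm c)) S
            @ map (\<lambda>(a, b, c). (Tm a, Tm b, P c)) S))"

definition TSD_delta1 :: "('k::field \<Rightarrow> 'g::ab_group_add \<Rightarrow> 'g) \<Rightarrow> ('g \<Rightarrow> 'g \<Rightarrow> 'g \<Rightarrow> 'g)
     \<Rightarrow> ('k \<times> 'g \<Rightarrow> 'k \<times> 'g) \<Rightarrow> 'k \<times> 'g \<Rightarrow> 'k \<times> 'g \<Rightarrow> 'k \<times> 'g \<Rightarrow> 'k \<times> 'g" where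
  "TSD_delta1 s br f x y z = f (TT s br x y z) - TT s br (f x) y z - TT s br x (f y) z - TT s br x y (f z)"

text \<open>delta^2 on pure tensors x (x) y (x) z (x) w (x) u; the Sweedler sums over
  Delta_3 w and Delta_3 u are expanded as sums over the list representatives.\<close>
definition TSD_delta2 :: "('k::field \<Rightarrow> 'g::ab_group_add \<Rightarrow> 'g) \<Rightarrow> ('g \<Rightarrow> 'g \<Rightarrow> 'g \<Rightarrow> 'g)
     \<Rightarrow> ('k \<times> 'g \<Rightarrow> 'k \<times> 'g \<Rightarrow> 'k \<times> 'g \<Rightarrow> 'k \<times> 'g)
     \<Rightarrow> 'k \<times> 'g \<Rightarrow> 'k \<times> 'g \<Rightarrow> 'k \<times> 'g \<Rightarrow> 'k \<times> 'g \<Rightarrow> 'k \<times> 'g \<Rightarrow> 'k \<times> 'g" where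
  "TSD_delta2 s br \<psi> x y z w u =
     (let T = TT s br;
          SW = [(tw, tu). tw \<leftarrow> Delta3 w, tu \<leftarrow> Delta3 u]
      in T (\<psi> x y z) w u + \<psi> (T x y z) w u
       - sum_list (map (\<lambda>((w1, w2, w3), (u1, u2, u3)). \<psi> (T x w1 u1) (T y w2 u2) (T z w3 u3)) SW)
       - sum_list (map (\<lambda>((w1, w2, w3), (u1, u2, u3)). T (\<psi> x w1 u1) (T y w2 u2) (T z w3 u3)) SW)
       - sum_list (map (\<lambda>((w1, w2, w3), (u1, u2, u3)). T (T x w1 u1) (\<psi> y w2 u2) (T z w3 u3)) SW)
       - sum_list (map (\<lambda>((w1, w2, w3), (u1, u2, u3)). T (T x w1 u1) (T y w2 u2) (\<psi> z w3 u3)) SW))"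

definition TSD_cocycle2 :: "('k::field \<Rightarrow> 'g::ab_group_add \<Rightarrow> 'g) \<Rightarrow> ('g \<Rightarrow> 'g \<Rightarrow> 'g \<Rightarrow> 'g)
     \<Rightarrow> ('k \<times> 'g \<Rightarrow> 'k \<times> 'g \<Rightarrow> 'k \<times> 'g \<Rightarrow> 'k \<times> 'g) \<Rightarrow> bool" where
  "TSD_cocycle2 s br \<psi> \<longleftrightarrow> TSD_C2 s br \<psi> \<and> (\<forall>x y z w u. TSD_delta2 s br \<psi> x y z w u = 0)"

definition TSD_coboundary2 :: "('k::field \<Rightarrow> 'g::ab_group_add \<Rightarrow> 'g) \<Rightarrow> ('g \<Rightarrow> 'g \<Rightarrow> 'g \<Rightarrow> 'g)
     \<Rightarrow> ('k \<times> 'g \<Rightarrow> 'k \<times> 'g \<Rightarrow> 'k \<times> 'g \<Rightarrow> 'k \<times> 'g) \<Rightarrow> bool" where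
  "TSD_coboundary2 s br \<psi> \<longleftrightarrow> (\<exists>f. TSD_C1 s f \<and> \<psi> = TSD_delta1 s br f)"

definition Lambda2 :: "('g \<Rightarrow> 'g \<Rightarrow> 'g \<Rightarrow> 'g) \<Rightarrow> 'k::zero \<times> 'g \<Rightarrow> 'k \<times> 'g \<Rightarrow> 'k \<times> 'g \<Rightarrow> 'k \<times> 'g" where
  "Lambda2 \<phi> p q r = (0, \<phi> (snd p) (snd q) (snd r))"

end

theory Submission imports Defs begin

lemma lin0: "is_linear s1 s2 f \<Longrightarrow> f 0 = 0"
  unfolding is_linear_def by (metis add_cancel_right_right add_0)

lemma lin0p: "is_linear s1 s2 f \<Longrightarrow> f (0,0) = 0"
  using lin0[of s1 s2 f] by (simp add: zero_prod_def)

context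
  fixes s :: "'k::field \<Rightarrow> 'g::ab_group_add \<Rightarrow> 'g" and br :: "'g \<Rightarrow> 'g \<Rightarrow> 'g \<Rightarrow> 'g"
  assumes L: "three_Lie s br"
begin

lemma VS: "vector_space s" using L by (simp add: three_Lie_def)

lemma sfacts[simp]: "s 0 x = 0" "s c 0 = 0" "s 1 x = x" "s a (s b x) = s (a*b) x"
  "s c (x + y) = s c x + s c y"
  using VS unfolding module_iff_vector_space[symmetric]
  by (auto simp: module.scale_zero_left module.scale_zero_right
     module.scale_one module.scale_scale module.scale_right_distrib)

lemma trilin_facts:
  assumes "trilin s s F"
  shows "F 0 y z = 0" "F x 0 z = 0" "F x y 0 = 0"
   "F (x + x') y z = F x y z + F x' y z" "F x (y + y') z = F x y z + F x y' z"
   "F x y (z + z') = F x y z + F x y z'"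
   "F (s c x) y z = s c (F x y z)" "F x (s c y) z = s c (F x y z)" "F x y (s c z) = s c (F x y z)"
proof -
  have a: "is_linear s s (\<lambda>x. F x y z)" "is_linear s s (\<lambda>y. F x y z)" "is_linear s s (\<lambda>z. F x y z)"
    for x y z using assms unfolding trilin_def by auto
  show "F 0 y z = 0" using lin0[OF a(1)] by simp
  show "F x 0 z = 0" using lin0[OF a(2)] by simp
  show "F x y 0 = 0" using lin0[OF a(3)] by simp
qed (use assms in \<open>auto simp: trilin_def is_linear_def\<close>)

lemma brf[simp]: "br 0 y z = 0" "br x 0 z = 0" "br x y 0 = 0"
   "br (x + x') y z = br x y z + br x' y z" "br x (y + y') z = br x y z + br x y' z"
   "br x y (z + z') = br x y z + br x y z'"
   "br (s c x) y z = s c (br x y z)" "br x (s c y) z = s c (br x y z)" "br x y (s c z) = s c (br x y z)"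
  using trilin_facts[of br] L by (auto simp: three_Lie_def)

lemma TT_simp: "TT s br (a,X) (b,Y) (c,Z) = (a*b*c, s (b*c) X + br X Y Z)"
  by (simp add: TT_def)

lemma cocycle:
  assumes "Lie_cocycle2 s br \<phi>"
  shows "TSD_cocycle2 s br (Lambda2 \<phi> :: 'k \<times> 'g \<Rightarrow> _)"
proof -
  have tp: "trilin s s \<phi>" using assms by (simp add: Lie_cocycle2_def Lie_cochain2_def)
  note pf[simp] = trilin_facts[OF tp]
  have d0: "\<And>x y z w u. Lie_delta2 br \<phi> x y z w u = 0" using assms by (simp add: Lie_cocycle2_def)
  have C2: "TSD_C2 s br (Lambda2 \<phi> :: 'k \<times> 'g \<Rightarrow> _)"
    unfolding TSD_C2_def
  proof (intro conjI allI)
    show "trilin (scaleX s) (scaleX s) (Lambda2 \<phi> :: 'k \<times> 'g \<Rightarrow> _)"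
      by (simp add: trilin_def is_linear_def Lambda2_def scaleX_def)
  next
    fix x y z :: "'k \<times> 'g"
    obtain a X where x: "x = (a,X)" by force
    obtain b Y where y: "y = (b,Y)" by force
    obtain c Z where z: "z = (c,Z)" by force
    show "teq3 s (Delta3 (Lambda2 \<phi> x y z))
        (let S = map sigma9 (Delta3_cube x y z);
             P = (\<lambda>(p, q, r). Lambda2 \<phi> p q r); Tm = (\<lambda>(p, q, r). TT s br p q r)
         in map (\<lambda>(a, b, c). (P a, Tm b, Tm c)) S @ map (\<lambda>(a, b, c). (Tm a, P b, Tm c)) S
            @ map (\<lambda>(a, b, c). (Tm a, Tm b, P c)) S)"
      unfolding teq3_def
      by (auto simp: lin0p x y z Delta3_def Delta_def Delta3_cube_def Lambda2_def TT_def Let_def)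
  qed
  have "TSD_delta2 s br (Lambda2 \<phi>) x y z w u = 0" for x y z w u :: "'k \<times> 'g"
  proof -
    obtain a X where x: "x = (a,X)" by force
    obtain b Y where y: "y = (b,Y)" by force
    obtain c Z where z: "z = (c,Z)" by force
    obtain d W where w: "w = (d,W)" by force
    obtain e U where u: "u = (e,U)" by force
    have D: "Lie_delta2 br \<phi> X Y Z W U = 0" by (rule d0)
    show ?thesis
      using D by (simp add: x y z w u TSD_delta2_def Delta3_def Delta_def Lambda2_def TT_def Let_def Lie_delta2_def;
          simp add: zero_prod_def algebra_simps)
  qed
  then show ?thesis using C2 by (simp add: TSD_cocycle2_def)
qed

lemma coboundary:
  assumes "Lie_coboundary2 s br \<phi>"
  shows "TSD_coboundary2 s br (Lambda2 \<phi> :: 'k \<times> 'g \<Rightarrow> _)"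
proof -
  obtain f where fl: "is_linear s s f" and ph: "\<phi> = Lie_delta1 br f"
    using assms by (auto simp: Lie_coboundary2_def)
  have f0[simp]: "f 0 = 0" using lin0[OF fl] .
  have fa[simp]: "f (x + y) = f x + f y" "f (s c x) = s c (f x)" for x y c
    using fl by (auto simp: is_linear_def)
  define F :: "'k \<times> 'g \<Rightarrow> 'k \<times> 'g" where "F = (\<lambda>p. (0, f (snd p)))"
  have C1: "TSD_C1 s F"
    unfolding TSD_C1_def
  proof (intro conjI allI)
    show "is_linear (scaleX s) (scaleX s) F"
      by (simp add: is_linear_def F_def scaleX_def)
  next
    fix w :: "'k \<times> 'g"
    obtain d W where w: "w = (d,W)" by force
    show "teq3 s (Delta3 (F w))
          (map (\<lambda>(p, q, r). (F p, q, r)) (Delta3 w) @ map (\<lambda>(p, q, r). (p, F q, r)) (Delta3 w)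
           @ map (\<lambda>(p, q, r). (p, q, F r)) (Delta3 w))"
      unfolding teq3_def
      by (auto simp: lin0p w Delta3_def Delta_def F_def)
  qed
  have "Lambda2 \<phi> = TSD_delta1 s br F"
  proof (intro ext)
    fix x y z :: "'k \<times> 'g"
    obtain a X where x: "x = (a,X)" by force
    obtain b Y where y: "y = (b,Y)" by force
    obtain c Z where z: "z = (c,Z)" by force
    show "Lambda2 \<phi> x y z = TSD_delta1 s br F x y z"
      by (simp add: x y z ph Lambda2_def TSD_delta1_def F_def TT_def Lie_delta1_def algebra_simps)
  qed
  then show ?thesis using C1 by (auto simp: TSD_coboundary2_def)
qed

end

theorem mainTheorem9:
  fixes s :: "'k::field \<Rightarrow> 'g::ab_group_add \<Rightarrow> 'g"
    and br :: "'g \<Rightarrow> 'g \<Rightarrow> 'g \<Rightarrow> 'g"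
  assumes "three_Lie s br"
  shows "(\<forall>\<phi>. Lie_cocycle2 s br \<phi> \<longrightarrow> TSD_cocycle2 s br (Lambda2 \<phi> :: 'k \<times> 'g \<Rightarrow> _))
       \<and> (\<forall>\<phi>. Lie_coboundary2 s br \<phi> \<longrightarrow> TSD_coboundary2 s br (Lambda2 \<phi> :: 'k \<times> 'g \<Rightarrow> _))
       \<and> (\<forall>\<phi> \<phi>'. (Lambda2 (\<lambda>x y z. \<phi> x y z + \<phi>' x y z) :: 'k \<times> 'g \<Rightarrow> _)
                  = (\<lambda>p q r. Lambda2 \<phi> p q r + Lambda2 \<phi>' p q r))
       \<and> (\<forall>(c::'k) \<phi>. (Lambda2 (\<lambda>x y z. s c (\<phi> x y z)) :: 'k \<times> 'g \<Rightarrow> _)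
                  = (\<lambda>p q r. scaleX s c (Lambda2 \<phi> p q r)))"
  using cocycle[OF assms] coboundary[OF assms]
  by (auto intro!: ext simp: Lambda2_def scaleX_def)

end
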